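(* For GCWN networks $M,M',N$ and any label $\delta$ (either $p:\alpha$ or $\tau$), if $M\xrightarrow{\delta}M'$ and $M\equiv N$, then there exists $N'$ such that $N\xrightarrow{\delta}N'$ and $M'\equiv N'$.
   Context: GCWN syntax. Fix a countable set ${\sf Loc}$ of locations, channel names $c,d,\dots$ with co-names $\overline{c}$, variables, values $v$ (not channels), expressions $e$, boolean expressions $b$, and an evaluation ${\sf eval}$ on variable-free expressions. A finite graph $G=(|G|,\frown_G)$ has a finite vertex set $|G|\subseteq{\sf Loc}$ and a symmetric irreflexive edge relation. For disjoint $G,H$ and $D\subseteq|G|\times|H|$, $G\oplus_D H$ has vertices $|G|\cup|H|$ and edges those of $G$, those of $H$ and (symmetrically) the pairs in $D$. Processes: $P::={\bf 0}\mid c(x).P\mid\overline{c}(e).P\mid P+Q\mid{\bf if}~b~{\bf then}~P~{\bf else}~Q\mid A(\vec v)$ with process constants defined by $A(\vec x)\stackrel{\rm def}{=}P$. Networks: $M::=G\langle\Phi\rangle\mid M\backslash c\mid M\oplus_D N$ with $\Phi:|G|\to$ processes; every network is of the form $G\langle\Phi\rangle\backslash I$, and for $M=G\langle\Phi\rangle\backslash I$, $N=H\langle\Psi\rangle\backslash J$ (disjoint locations, $I\cap J=\emptyset$), $M\oplus_D N=(G\oplus_D H)\langle\Phi\cup\Psi\rangle\backslash(I\cup J)$. Write $|M|=|G|$, $M(p)=\Phi(p)$, $\frown_M=\frown_G$, $M[p\mapsto Q]$ for replacing the process at $p$ by $Q$. Networks are data-closed. Structural congruence $\equiv$: least congruence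 with $P+{\bf 0}\equiv P$, $P+Q\equiv Q+P$, $P+(Q+R)\equiv(P+Q)+R$, conditionals equal to the branch selected by ${\sf eval}(b)$, $A(\vec v)\equiv P\{\vec v/\vec x\}$ for $A(\vec x)\stackrel{\rm def}{=}P$, $\alpha$-conversion of restricted channels, $M\backslash c\backslash d\equiv M\backslash d\backslash c$, $M\oplus_D N\equiv N\oplus_D M$, $(M\oplus_D N)\backslash c\equiv M\oplus_D(N\backslash c)$ if $c,\overline c$ not in $M$, and $G\langle\Phi\rangle\equiv G\langle\Psi\rangle$ if $\Phi(p)\equiv\Psi(p)$ for all $p$. Labelled transitions. Actions $\alpha::=cv\mid\overline{c}v$. Processes: $\overline{c}(e).P\xrightarrow{\overline{c}v}P$ if ${\sf eval}(e)=v$; $c(x).P\xrightarrow{cv}P\{v/x\}$; $P+Q$ does any transition of $P$ or of $Q$; ${\bf if}~b~{\bf then}~P~{\bf else}~Q$ does the transitions of $P$ if ${\sf eval}(b)=true$, of $Q$ if $false$; $A(\vec v)$ does the transitions of $P\{\vec v/\vec x\}$ where $A(\vec x)\stackrel{\rm def}{=}P$. Networks, labels $\delta::=p:\alpha\mid\tau$: (N-Send) if $p\in|M|$ and $M(p)\xrightarrow{\overline cv}P'$ then $M\xrightarrow{p:\overline cv}M[p\mapsto P']$; (N-Recv) if $p\in|M|$ and $M(p)\xrightarrow{cv}P'$ then $M\xrightarrow{p:cv}M[p\mapsto P']$; (N-Bcast) if $M\xrightarrow{p:\overline cv}M'$, $N\xrightarrow{q:cv}N'$ and $(p,q)\in D$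 then $M\oplus_D N\xrightarrow{p:\overline cv}M'\oplus_D N'$ and $N\oplus_D M\xrightarrow{p:\overline cv}N'\oplus_D M'$; (N-Res1) $M\xrightarrow{p:\overline cv}M'$ implies $M\backslash c\xrightarrow{\tau}M'\backslash c$; (N-Res2) $M\xrightarrow{\delta}M'$ with $c,\overline c$ not in $\delta$ implies $M\backslash c\xrightarrow{\delta}M'\backslash c$; (N-ParL/R) $M\xrightarrow{\delta}M'$ implies $M\oplus_D N\xrightarrow{\delta}M'\oplus_D N$, and $N\xrightarrow{\delta}N'$ implies $M\oplus_D N\xrightarrow{\delta}M\oplus_D N'$. *)

theory Defs
  imports Main "HOL-Library.Countable"
begin

text \<open>Type parameters: 'l locations (countable), 'c channel names, 'v values,
  'e (closed) expressions, 'b (closed) boolean expressions, 'k process-constant names.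
  Input binders are represented higher-order (c(x).P as PRecv c (\<lambda>v. P{v/x})),
  so all processes are data-closed by construction.\<close>

datatype ('c,'v,'e,'b,'k) proc =
    PNil
  | PRecv 'c "'v \<Rightarrow> ('c,'v,'e,'b,'k) proc"
  | PSend 'c 'e "('c,'v,'e,'b,'k) proc"
  | PSum "('c,'v,'e,'b,'k) proc" "('c,'v,'e,'b,'k) proc"
  | PIf 'b "('c,'v,'e,'b,'k) proc" "('c,'v,'e,'b,'k) proc"
  | PCall 'k "'v list"

text \<open>Networks: G<Phi> (vertex set, edge relation, process assignment), M\c, M (+)_D N.\<close>
datatype ('l,'c,'v,'e,'b,'k) net =
    NLeaf "'l set" "('l \<times> 'l) set" "'l \<Rightarrow> ('c,'v,'e,'b,'k) proc"
  | NRes 'c "('l,'c,'v,'e,'b,'k) net"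
  | NPar "('l,'c,'v,'e,'b,'k) net" "('l \<times> 'l) set" "('l,'c,'v,'e,'b,'k) net"

datatype ('c,'v) act = AIn 'c 'v | AOut 'c 'v

datatype ('l,'c,'v) lab = LIn 'l 'c 'v | LOut 'l 'c 'v | Tau

type_synonym ('c,'v,'e,'b,'k) cdefs = "'k \<Rightarrow> 'v list \<Rightarrow> ('c,'v,'e,'b,'k) proc"

primrec locs :: "('l,'c,'v,'e,'b,'k) net \<Rightarrow> 'l set" where
  "locs (NLeaf V E \<Phi>) = V"
| "locs (NRes c M) = locs M"
| "locs (NPar M D N) = locs M \<union> locs N"

text \<open>Well-formed networks (finite simple graphs, disjoint locations, D between the two parts;
  D is read as a set of undirected edges).\<close>
primrec wf_net :: "('l,'c,'v,'e,'b,'k) net \<Rightarrow> bool" where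
  "wf_net (NLeaf V E \<Phi>) \<longleftrightarrow> finite V \<and> E \<subseteq> V \<times> V \<and> (\<forall>x y. (x,y) \<in> E \<longrightarrow> (y,x) \<in> E)
       \<and> (\<forall>x. (x,x) \<notin> E)"
| "wf_net (NRes c M) \<longleftrightarrow> wf_net M"
| "wf_net (NPar M D N) \<longleftrightarrow> wf_net M \<and> wf_net N \<and> locs M \<inter> locs N = {}
       \<and> D \<subseteq> (locs M \<times> locs N) \<union> (locs N \<times> locs M)"

inductive pocc :: "('c,'v,'e,'b,'k) cdefs \<Rightarrow> 'c \<Rightarrow> ('c,'v,'e,'b,'k) proc \<Rightarrow> bool"
  for defs where
  "pocc defs c (PRecv c f)"
| "pocc defs c (f v) \<Longrightarrow> pocc defs c (PRecv a f)"
| "pocc defs c (PSend c e P)"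
| "pocc defs c P \<Longrightarrow> pocc defs c (PSend a e P)"
| "pocc defs c P \<Longrightarrow> pocc defs c (PSum P Q)"
| "pocc defs c Q \<Longrightarrow> pocc defs c (PSum P Q)"
| "pocc defs c P \<Longrightarrow> pocc defs c (PIf b P Q)"
| "pocc defs c Q \<Longrightarrow> pocc defs c (PIf b P Q)"
| "pocc defs c (defs A vs) \<Longrightarrow> pocc defs c (PCall A vs)"

inductive pcallocc :: "('c,'v,'e,'b,'k) cdefs \<Rightarrow> 'c \<Rightarrow> ('c,'v,'e,'b,'k) proc \<Rightarrow> bool"
  for defs where
  "pocc defs c (PCall A vs) \<Longrightarrow> pcallocc defs c (PCall A vs)"
| "pcallocc defs c (f v) \<Longrightarrow> pcallocc defs c (PRecv a f)"
| "pcallocc defs c P \<Longrightarrow> pcallocc defs c (PSend a e P)"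
| "pcallocc defs c P \<Longrightarrow> pcallocc defs c (PSum P Q)"
| "pcallocc defs c Q \<Longrightarrow> pcallocc defs c (PSum P Q)"
| "pcallocc defs c P \<Longrightarrow> pcallocc defs c (PIf b P Q)"
| "pcallocc defs c Q \<Longrightarrow> pcallocc defs c (PIf b P Q)"

primrec nfree :: "('c,'v,'e,'b,'k) cdefs \<Rightarrow> 'c \<Rightarrow> ('l,'c,'v,'e,'b,'k) net \<Rightarrow> bool" where
  "nfree defs c (NLeaf V E \<Phi>) \<longleftrightarrow> (\<exists>p\<in>V. pocc defs c (\<Phi> p))"
| "nfree defs c (NRes a M) \<longleftrightarrow> a \<noteq> c \<and> nfree defs c M"
| "nfree defs c (NPar M D N) \<longleftrightarrow> nfree defs c M \<or> nfree defs c N"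

primrec nocc :: "('c,'v,'e,'b,'k) cdefs \<Rightarrow> 'c \<Rightarrow> ('l,'c,'v,'e,'b,'k) net \<Rightarrow> bool" where
  "nocc defs c (NLeaf V E \<Phi>) \<longleftrightarrow> (\<exists>p\<in>V. pocc defs c (\<Phi> p))"
| "nocc defs c (NRes a M) \<longleftrightarrow> a = c \<or> nocc defs c M"
| "nocc defs c (NPar M D N) \<longleftrightarrow> nocc defs c M \<or> nocc defs c N"

primrec ncallocc :: "('c,'v,'e,'b,'k) cdefs \<Rightarrow> 'c \<Rightarrow> ('l,'c,'v,'e,'b,'k) net \<Rightarrow> bool" where
  "ncallocc defs c (NLeaf V E \<Phi>) \<longleftrightarrow> (\<exists>p\<in>V. pcallocc defs c (\<Phi> p))"
| "ncallocc defs c (NRes a M) \<longleftrightarrow> a \<noteq> c \<and> ncallocc defs c M"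
| "ncallocc defs c (NPar M D N) \<longleftrightarrow> ncallocc defs c M \<or> ncallocc defs c N"

text \<open>Renaming channel c to d (P{d/c}); constant calls are left untouched, which is
  only used when c does not occur in any call.\<close>
primrec pren :: "'c \<Rightarrow> 'c \<Rightarrow> ('c,'v,'e,'b,'k) proc \<Rightarrow> ('c,'v,'e,'b,'k) proc" where
  "pren c d PNil = PNil"
| "pren c d (PRecv a f) = PRecv (if a = c then d else a) (\<lambda>v. pren c d (f v))"
| "pren c d (PSend a e P) = PSend (if a = c then d else a) e (pren c d P)"
| "pren c d (PSum P Q) = PSum (pren c d P) (pren c d Q)"
| "pren c d (PIf b P Q) = PIf b (pren c d P) (pren c d Q)"
| "pren c d (PCall A vs) = PCall A vs"

primrec nren :: "'c \<Rightarrow> 'c \<Rightarrow> ('l,'c,'v,'e,'b,'k) net \<Rightarrow> ('l,'c,'v,'e,'b,'k) net" where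
  "nren c d (NLeaf V E \<Phi>) = NLeaf V E (\<lambda>p. pren c d (\<Phi> p))"
| "nren c d (NRes a M) = (if a = c then NRes a M else NRes a (nren c d M))"
| "nren c d (NPar M D N) = NPar (nren c d M) D (nren c d N)"

inductive pcong :: "('b \<Rightarrow> bool) \<Rightarrow> ('c,'v,'e,'b,'k) cdefs
    \<Rightarrow> ('c,'v,'e,'b,'k) proc \<Rightarrow> ('c,'v,'e,'b,'k) proc \<Rightarrow> bool"
  for evalb defs where
  prefl: "pcong evalb defs P P"
| psym: "pcong evalb defs P Q \<Longrightarrow> pcong evalb defs Q P"
| ptrans: "pcong evalb defs P Q \<Longrightarrow> pcong evalb defs Q R \<Longrightarrow> pcong evalb defs P R"
| psum_nil: "pcong evalb defs (PSum P PNil) P"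
| psum_comm: "pcong evalb defs (PSum P Q) (PSum Q P)"
| psum_assoc: "pcong evalb defs (PSum P (PSum Q R)) (PSum (PSum P Q) R)"
| pif: "pcong evalb defs (PIf b P Q) (if evalb b then P else Q)"
| pcall: "pcong evalb defs (PCall A vs) (defs A vs)"
| pctx_recv: "(\<And>v. pcong evalb defs (f v) (g v)) \<Longrightarrow> pcong evalb defs (PRecv c f) (PRecv c g)"
| pctx_send: "pcong evalb defs P Q \<Longrightarrow> pcong evalb defs (PSend c e P) (PSend c e Q)"
| pctx_sum: "pcong evalb defs P P' \<Longrightarrow> pcong evalb defs Q Q'
     \<Longrightarrow> pcong evalb defs (PSum P Q) (PSum P' Q')"
| pctx_if: "pcong evalb defs P P' \<Longrightarrow> pcong evalb defs Q Q'
     \<Longrightarrow> pcong evalb defs (PIf b P Q) (PIf b P' Q')"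

inductive ncong :: "('b \<Rightarrow> bool) \<Rightarrow> ('c,'v,'e,'b,'k) cdefs
    \<Rightarrow> ('l,'c,'v,'e,'b,'k) net \<Rightarrow> ('l,'c,'v,'e,'b,'k) net \<Rightarrow> bool"
  for evalb defs where
  nrefl: "ncong evalb defs M M"
| nsym: "ncong evalb defs M N \<Longrightarrow> ncong evalb defs N M"
| ntrans_cong: "ncong evalb defs M N \<Longrightarrow> ncong evalb defs N K \<Longrightarrow> ncong evalb defs M K"
| nalpha: "\<not> nocc defs d M \<Longrightarrow> \<not> ncallocc defs c M
     \<Longrightarrow> ncong evalb defs (NRes c M) (NRes d (nren c d M))"
| nres_comm: "ncong evalb defs (NRes c (NRes d M)) (NRes d (NRes c M))"
| npar_comm: "ncong evalb defs (NPar M D N) (NPar N D M)"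
| nextrude: "\<not> nfree defs c M \<Longrightarrow> ncong evalb defs (NRes c (NPar M D N)) (NPar M D (NRes c N))"
| nctx_leaf: "(\<And>p. p \<in> V \<Longrightarrow> pcong evalb defs (\<Phi> p) (\<Psi> p))
     \<Longrightarrow> ncong evalb defs (NLeaf V E \<Phi>) (NLeaf V E \<Psi>)"
| nctx_res: "ncong evalb defs M N \<Longrightarrow> ncong evalb defs (NRes c M) (NRes c N)"
| nctx_par: "ncong evalb defs M M' \<Longrightarrow> ncong evalb defs N N'
     \<Longrightarrow> ncong evalb defs (NPar M D N) (NPar M' D N')"

inductive ptr :: "('e \<Rightarrow> 'v) \<Rightarrow> ('b \<Rightarrow> bool) \<Rightarrow> ('c,'v,'e,'b,'k) cdefs
    \<Rightarrow> ('c,'v,'e,'b,'k) proc \<Rightarrow> ('c,'v) act \<Rightarrow> ('c,'v,'e,'b,'k) proc \<Rightarrow> bool"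
  for eval evalb defs where
  "eval e = v \<Longrightarrow> ptr eval evalb defs (PSend c e P) (AOut c v) P"
| "ptr eval evalb defs (PRecv c f) (AIn c v) (f v)"
| "ptr eval evalb defs P \<alpha> P' \<Longrightarrow> ptr eval evalb defs (PSum P Q) \<alpha> P'"
| "ptr eval evalb defs Q \<alpha> Q' \<Longrightarrow> ptr eval evalb defs (PSum P Q) \<alpha> Q'"
| "evalb b \<Longrightarrow> ptr eval evalb defs P \<alpha> P' \<Longrightarrow> ptr eval evalb defs (PIf b P Q) \<alpha> P'"
| "\<not> evalb b \<Longrightarrow> ptr eval evalb defs Q \<alpha> Q' \<Longrightarrow> ptr eval evalb defs (PIf b P Q) \<alpha> Q'"
| "ptr eval evalb defs (defs A vs) \<alpha> P' \<Longrightarrow> ptr eval evalb defs (PCall A vs) \<alpha> P'"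

fun lab_has_chan :: "('l,'c,'v) lab \<Rightarrow> 'c \<Rightarrow> bool" where
  "lab_has_chan (LIn p a v) c = (a = c)"
| "lab_has_chan (LOut p a v) c = (a = c)"
| "lab_has_chan Tau c = False"

inductive ntr :: "('e \<Rightarrow> 'v) \<Rightarrow> ('b \<Rightarrow> bool) \<Rightarrow> ('c,'v,'e,'b,'k) cdefs
    \<Rightarrow> ('l,'c,'v,'e,'b,'k) net \<Rightarrow> ('l,'c,'v) lab \<Rightarrow> ('l,'c,'v,'e,'b,'k) net \<Rightarrow> bool"
  for eval evalb defs where
  n_send: "p \<in> V \<Longrightarrow> ptr eval evalb defs (\<Phi> p) (AOut c v) P'
     \<Longrightarrow> ntr eval evalb defs (NLeaf V E \<Phi>) (LOut p c v) (NLeaf V E (\<Phi>(p := P')))"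
| n_recv: "p \<in> V \<Longrightarrow> ptr eval evalb defs (\<Phi> p) (AIn c v) P'
     \<Longrightarrow> ntr eval evalb defs (NLeaf V E \<Phi>) (LIn p c v) (NLeaf V E (\<Phi>(p := P')))"
| n_bcast1: "ntr eval evalb defs M (LOut p c v) M' \<Longrightarrow> ntr eval evalb defs N (LIn q c v) N'
     \<Longrightarrow> (p,q) \<in> D \<or> (q,p) \<in> D
     \<Longrightarrow> ntr eval evalb defs (NPar M D N) (LOut p c v) (NPar M' D N')"
| n_bcast2: "ntr eval evalb defs M (LOut p c v) M' \<Longrightarrow> ntr eval evalb defs N (LIn q c v) N'
     \<Longrightarrow> (p,q) \<in> D \<or> (q,p) \<in> D
     \<Longrightarrow> ntr eval evalb defs (NPar N D M) (LOut p c v) (NPar N' D M')"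
| n_res1: "ntr eval evalb defs M (LOut p c v) M'
     \<Longrightarrow> ntr eval evalb defs (NRes c M) Tau (NRes c M')"
| n_res2: "ntr eval evalb defs M \<delta> M' \<Longrightarrow> \<not> lab_has_chan \<delta> c
     \<Longrightarrow> ntr eval evalb defs (NRes c M) \<delta> (NRes c M')"
| n_parL: "ntr eval evalb defs M \<delta> M' \<Longrightarrow> ntr eval evalb defs (NPar M D N) \<delta> (NPar M' D N)"
| n_parR: "ntr eval evalb defs N \<delta> N' \<Longrightarrow> ntr eval evalb defs (NPar M D N) \<delta> (NPar M D N')"

end

theory Submission
  imports Defs
begin

section \<open>Inversion characterisations\<close>

lemma ptr_PNil[simp]: "\<not> ptr eval evalb defs PNil \<alpha> P"
  by (auto elim: ptr.cases)

lemma ptr_PRecv[simp]: "ptr eval evalb defs (PRecv c f) \<alpha> P \<longleftrightarrow> (\<exists>v. \<alpha> = AIn c v \<and> P = f v)"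
  by (auto elim: ptr.cases intro: ptr.intros)

lemma ptr_PSend[simp]: "ptr eval evalb defs (PSend c e Q) \<alpha> P \<longleftrightarrow> \<alpha> = AOut c (eval e) \<and> P = Q"
  by (auto elim: ptr.cases intro: ptr.intros)

lemma ptr_PSum[simp]: "ptr eval evalb defs (PSum P Q) \<alpha> R \<longleftrightarrow> ptr eval evalb defs P \<alpha> R \<or> ptr eval evalb defs Q \<alpha> R"
  by (auto elim: ptr.cases intro: ptr.intros)

lemma ptr_PIf[simp]: "ptr eval evalb defs (PIf b P Q) \<alpha> R \<longleftrightarrow>
    (if evalb b then ptr eval evalb defs P \<alpha> R else ptr eval evalb defs Q \<alpha> R)"
  by (auto elim: ptr.cases intro: ptr.intros)

lemma ptr_PCall[simp]: "ptr eval evalb defs (PCall A vs) \<alpha> R \<longleftrightarrow> ptr eval evalb defs (defs A vs) \<alpha> R"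
  by (auto elim: ptr.cases intro: ptr.intros)

lemma ntr_NLeaf: "ntr eval evalb defs (NLeaf V E \<Phi>) \<delta> X \<longleftrightarrow>
   (\<exists>p c v P'. p \<in> V \<and> ((\<delta> = LOut p c v \<and> ptr eval evalb defs (\<Phi> p) (AOut c v) P')
      \<or> (\<delta> = LIn p c v \<and> ptr eval evalb defs (\<Phi> p) (AIn c v) P')) \<and> X = NLeaf V E (\<Phi>(p := P')))"
  apply (rule iffI)
   apply (erule ntr.cases; blast)
  apply (elim exE conjE disjE; simp)
   apply (blast intro: ntr.intros)+
  done

lemma ntr_NRes: "ntr eval evalb defs (NRes c M) \<delta> X \<longleftrightarrow>
   (\<exists>M'. X = NRes c M' \<and> ((\<exists>p v. \<delta> = Tau \<and> ntr eval evalb defs M (LOut p c v) M')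
       \<or> (ntr eval evalb defs M \<delta> M' \<and> \<not> lab_has_chan \<delta> c)))"
  apply (rule iffI)
   apply (erule ntr.cases; blast)
  apply (elim exE conjE disjE; simp)
   apply (blast intro: ntr.intros)+
  done

lemma ntr_NPar: "ntr eval evalb defs (NPar M D N) \<delta> X \<longleftrightarrow>
   (\<exists>M' N'. X = NPar M' D N' \<and>
     ((\<exists>p q c v. \<delta> = LOut p c v \<and> ntr eval evalb defs M (LOut p c v) M' \<and> ntr eval evalb defs N (LIn q c v) N' \<and> ((p,q) \<in> D \<or> (q,p) \<in> D))
    \<or> (\<exists>p q c v. \<delta> = LOut p c v \<and> ntr eval evalb defs N (LOut p c v) N' \<and> ntr eval evalb defs M (LIn q c v) M' \<and> ((p,q) \<in> D \<or> (q,p) \<in> D))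
    \<or> (ntr eval evalb defs M \<delta> M' \<and> N' = N)
    \<or> (M' = M \<and> ntr eval evalb defs N \<delta> N')))"
  apply (rule iffI)
   apply (erule ntr.cases; blast)
  apply (elim exE conjE disjE; simp)
     apply (blast intro: ntr.intros)+
  done


section \<open>Process congruence preserves transitions\<close>

definition psim where
  "psim eval evalb defs P Q \<longleftrightarrow> (\<forall>\<alpha> P'. ptr eval evalb defs P \<alpha> P' \<longrightarrow>
      (\<exists>Q'. ptr eval evalb defs Q \<alpha> Q' \<and> pcong evalb defs P' Q'))"

lemma pcong_psim:
  "pcong evalb defs P Q \<Longrightarrow> psim eval evalb defs P Q \<and> psim eval evalb defs Q P"
proof (induction rule: pcong.induct)
  case (prefl P) then show ?case by (auto simp: psim_def intro: pcong.prefl)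
next
  case (psym P Q) then show ?case by blast
next
  case (ptrans P Q R) then show ?case
    unfolding psim_def by (meson pcong.ptrans)
next
  case (psum_nil P) then show ?case by (auto simp: psim_def intro: pcong.prefl)
next
  case (psum_comm P Q) then show ?case by (auto simp: psim_def intro: pcong.prefl)
next
  case (psum_assoc P Q R) then show ?case by (auto simp: psim_def intro: pcong.prefl)
next
  case (pif b P Q) then show ?case by (auto simp: psim_def intro: pcong.prefl)
next
  case (pcall A vs) then show ?case by (auto simp: psim_def intro: pcong.prefl)
next
  case (pctx_recv f g c) then show ?case by (auto simp: psim_def intro: pcong.psym)
next
  case (pctx_send P Q c e) then show ?case by (auto simp: psim_def intro: pcong.psym)
next
  case (pctx_sum P P' Q Q') then show ?case unfolding psim_def by (simp, meson)
next
  case (pctx_if P P' Q Q' b) then show ?case unfolding psim_def by (cases "evalb b") simp_all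
qed

section \<open>Occurrences\<close>

lemma ptr_chan: "ptr eval evalb defs P \<alpha> P' \<Longrightarrow> \<alpha> = AOut c v \<or> \<alpha> = AIn c v \<Longrightarrow> pocc defs c P"
  by (induction rule: ptr.induct) (auto intro: pocc.intros)

lemma ptr_pocc: "ptr eval evalb defs P \<alpha> P' \<Longrightarrow> pocc defs a P' \<Longrightarrow> pocc defs a P"
  by (induction rule: ptr.induct) (auto intro: pocc.intros)

lemma pcallocc_pocc: "pcallocc defs a P \<Longrightarrow> pocc defs a P"
  by (induction rule: pcallocc.induct) (auto intro: pocc.intros)

lemma ptr_pcallocc: "ptr eval evalb defs P \<alpha> P' \<Longrightarrow> pcallocc defs a P' \<Longrightarrow> pcallocc defs a P"
proof (induction rule: ptr.induct)
  case (7 A vs \<alpha> P')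
  then show ?case by (meson pcallocc.intros(1) pcallocc_pocc pocc.intros(9) ptr_pocc)
qed (auto intro: pcallocc.intros)

lemma ntr_lab: "ntr eval evalb defs M \<delta> M' \<Longrightarrow> lab_has_chan \<delta> a \<Longrightarrow> nfree defs a M"
  by (induction rule: ntr.induct) (auto dest: ptr_chan)

lemma nfree_nocc: "nfree defs a M \<Longrightarrow> nocc defs a M"
  by (induction M) auto

lemma ntr_nfree: "ntr eval evalb defs M \<delta> M' \<Longrightarrow> nfree defs a M' \<Longrightarrow> nfree defs a M"
  by (induction rule: ntr.induct) (auto split: if_splits dest: ptr_pocc)

lemma ntr_nocc: "ntr eval evalb defs M \<delta> M' \<Longrightarrow> nocc defs a M' \<Longrightarrow> nocc defs a M"
  by (induction rule: ntr.induct) (auto split: if_splits dest: ptr_pocc)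

lemma ntr_ncallocc: "ntr eval evalb defs M \<delta> M' \<Longrightarrow> ncallocc defs a M' \<Longrightarrow> ncallocc defs a M"
  by (induction rule: ntr.induct) (auto split: if_splits dest: ptr_pcallocc)

lemma ntr_wf: "ntr eval evalb defs M \<delta> M' \<Longrightarrow> locs M' = locs M \<and> (wf_net M \<longrightarrow> wf_net M')"
  by (induction rule: ntr.induct) auto


section \<open>Renaming\<close>

definition rc :: "'c \<Rightarrow> 'c \<Rightarrow> 'c \<Rightarrow> 'c" where "rc c d a = (if a = c then d else a)"

fun aren :: "'c \<Rightarrow> 'c \<Rightarrow> ('c,'v) act \<Rightarrow> ('c,'v) act" where
  "aren c d (AIn a v) = AIn (rc c d a) v"
| "aren c d (AOut a v) = AOut (rc c d a) v"

fun lren :: "'c \<Rightarrow> 'c \<Rightarrow> ('l,'c,'v) lab \<Rightarrow> ('l,'c,'v) lab" where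
  "lren c d (LIn p a v) = LIn p (rc c d a) v"
| "lren c d (LOut p a v) = LOut p (rc c d a) v"
| "lren c d Tau = Tau"

lemma lren_id: "\<not> lab_has_chan \<delta> c \<Longrightarrow> lren c d \<delta> = \<delta>"
  by (cases \<delta>) (auto simp: rc_def)

lemma lren_has: "a \<noteq> c \<Longrightarrow> a \<noteq> d \<Longrightarrow> lab_has_chan (lren c d \<delta>) a = lab_has_chan \<delta> a"
  by (cases \<delta>) (auto simp: rc_def)

lemma pren_id: "\<not> pocc defs c P \<Longrightarrow> pren c d P = P"
  by (induction P) (auto intro: pocc.intros)

lemma ptr_pren: "ptr eval evalb defs P \<alpha> P' \<Longrightarrow> \<not> pcallocc defs c P
   \<Longrightarrow> ptr eval evalb defs (pren c d P) (aren c d \<alpha>) (pren c d P')"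
proof (induction rule: ptr.induct)
  case (1 e v c' P)
  then show ?case by (simp add: rc_def)
next
  case (2 c' f v)
  then show ?case by (simp add: rc_def)
next
  case (7 A vs \<alpha> P')
  have nc: "\<not> pocc defs c (defs A vs)"
    using 7(3) by (meson pcallocc.intros(1) pocc.intros(9))
  have "pren c d P' = P'" using nc 7(1) by (meson pren_id ptr_pocc)
  moreover have "aren c d \<alpha> = \<alpha>"
    using nc 7(1) by (cases \<alpha>) (auto simp: rc_def dest: ptr_chan)
  ultimately show ?case using 7(1) by simp
qed (auto intro: pcallocc.intros)

lemma aren_inv:
  "aren c d \<alpha>0 = AOut a v \<Longrightarrow> \<exists>a0. \<alpha>0 = AOut a0 v \<and> a = rc c d a0"
  "aren c d \<alpha>0 = AIn a v \<Longrightarrow> \<exists>a0. \<alpha>0 = AIn a0 v \<and> a = rc c d a0"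
  by (cases \<alpha>0; auto)+

lemma lren_inv:
  "lren c d \<delta>0 = LOut p a v \<Longrightarrow> \<exists>a0. \<delta>0 = LOut p a0 v \<and> a = rc c d a0"
  "lren c d \<delta>0 = LIn p a v \<Longrightarrow> \<exists>a0. \<delta>0 = LIn p a0 v \<and> a = rc c d a0"
  "lren c d \<delta>0 = Tau \<Longrightarrow> \<delta>0 = Tau"
  by (cases \<delta>0; auto)+

lemma ptr_pren_inv: "ptr eval evalb defs (pren c d P) \<alpha> Q \<Longrightarrow> \<not> pcallocc defs c P \<Longrightarrow> \<not> pocc defs d P
   \<Longrightarrow> \<exists>\<alpha>0 P'. ptr eval evalb defs P \<alpha>0 P' \<and> \<alpha> = aren c d \<alpha>0 \<and> Q = pren c d P'"
proof (induction P arbitrary: \<alpha> Q)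
  case PNil
  then show ?case by simp
next
  case (PRecv a f)
  then obtain v where "\<alpha> = AIn (rc c d a) v" "Q = pren c d (f v)" by (auto simp: rc_def)
  then show ?case by (intro exI[of _ "AIn a v"] exI[of _ "f v"]) simp
next
  case (PSend a e P)
  then have "\<alpha> = AOut (rc c d a) (eval e)" "Q = pren c d P" by (auto simp: rc_def)
  then show ?case by (intro exI[of _ "AOut a (eval e)"] exI[of _ P]) simp
next
  case (PSum P1 P2)
  then show ?case by (auto intro: pcallocc.intros pocc.intros) (meson pcallocc.intros pocc.intros)+
next
  case (PIf b P1 P2)
  then show ?case by (cases "evalb b") (simp_all, (meson pcallocc.intros pocc.intros)+)
next
  case (PCall A vs)
  have nc: "\<not> pocc defs c (defs A vs)"
    using PCall(2) by (meson pcallocc.intros(1) pocc.intros(9))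
  have t: "ptr eval evalb defs (defs A vs) \<alpha> Q" using PCall(1) by simp
  have "pren c d Q = Q" using nc t by (meson pren_id ptr_pocc)
  moreover have "aren c d \<alpha> = \<alpha>"
    using nc t by (cases \<alpha>) (auto simp: rc_def dest: ptr_chan)
  ultimately show ?case using t by (intro exI[of _ \<alpha>] exI[of _ Q]) simp
qed


lemma nren_leaf_upd: "(\<lambda>q. pren c d ((\<Phi>(p := P')) q)) = (\<lambda>q. pren c d (\<Phi> q))(p := pren c d P')"
  by auto

lemma ntr_nren: "ntr eval evalb defs M \<delta> M' \<Longrightarrow> \<not> ncallocc defs c M \<Longrightarrow> \<not> nocc defs d M
   \<Longrightarrow> ntr eval evalb defs (nren c d M) (lren c d \<delta>) (nren c d M')"
proof (induction rule: ntr.induct)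
  case (n_send p V \<Phi> a v P' E)
  have "ptr eval evalb defs (pren c d (\<Phi> p)) (aren c d (AOut a v)) (pren c d P')"
    using n_send by (intro ptr_pren) auto
  then have "ntr eval evalb defs (NLeaf V E (\<lambda>q. pren c d (\<Phi> q))) (LOut p (rc c d a) v)
      (NLeaf V E ((\<lambda>q. pren c d (\<Phi> q))(p := pren c d P')))"
    using n_send(1) by (intro ntr.n_send) simp_all
  then show ?case by (simp only: nren.simps lren.simps nren_leaf_upd)
next
  case (n_recv p V \<Phi> a v P' E)
  have "ptr eval evalb defs (pren c d (\<Phi> p)) (aren c d (AIn a v)) (pren c d P')"
    using n_recv by (intro ptr_pren) auto
  then have "ntr eval evalb defs (NLeaf V E (\<lambda>q. pren c d (\<Phi> q))) (LIn p (rc c d a) v)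
      (NLeaf V E ((\<lambda>q. pren c d (\<Phi> q))(p := pren c d P')))"
    using n_recv(1) by (intro ntr.n_recv) simp_all
  then show ?case by (simp only: nren.simps lren.simps nren_leaf_upd)
next
  case (n_bcast1 M p a v M' N q N' D)
  then show ?case by (auto intro: ntr.n_bcast1)
next
  case (n_bcast2 M p a v M' N q N' D)
  then show ?case by (auto intro: ntr.n_bcast2)
next
  case (n_res1 M p a v M')
  show ?case
  proof (cases "a = c")
    case True then show ?thesis using n_res1 by (auto intro: ntr.n_res1)
  next
    case False
    then have "a \<noteq> d" using n_res1 by auto
    then show ?thesis using n_res1 False by (auto simp: rc_def intro: ntr.n_res1)
  qed
next
  case (n_res2 M \<delta> M' a)
  show ?case
  proof (cases "a = c")
    case True then show ?thesis using n_res2 by (auto simp: lren_id intro: ntr.n_res2)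
  next
    case False
    then have "a \<noteq> d" using n_res2 by auto
    then show ?thesis using n_res2 False by (auto simp: lren_has intro: ntr.n_res2)
  qed
next
  case (n_parL M \<delta> M' D N)
  then show ?case by (auto intro: ntr.n_parL)
next
  case (n_parR N \<delta> N' M D)
  then show ?case by (auto intro: ntr.n_parR)
qed

lemma rc_inj: "rc c d a1 = rc c d a2 \<Longrightarrow> a1 \<noteq> d \<Longrightarrow> a2 \<noteq> d \<Longrightarrow> a1 = a2"
  by (auto simp: rc_def split: if_splits)

lemma ntr_chan_ne: "ntr eval evalb defs M \<delta> M' \<Longrightarrow> \<not> nocc defs d M \<Longrightarrow> \<not> lab_has_chan \<delta> d"
  by (meson ntr_lab nfree_nocc)

lemma ntr_nren_inv: "ntr eval evalb defs (nren c d M) \<delta>' Y \<Longrightarrow> \<not> ncallocc defs c M \<Longrightarrow> \<not> nocc defs d M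
   \<Longrightarrow> \<exists>\<delta> M'. ntr eval evalb defs M \<delta> M' \<and> \<delta>' = lren c d \<delta> \<and> Y = nren c d M'"
proof (induction M arbitrary: \<delta>' Y)
  case (NLeaf V E \<Phi>)
  from NLeaf(1) obtain p a v P' where p: "p \<in> V" and Y: "Y = NLeaf V E ((\<lambda>q. pren c d (\<Phi> q))(p := P'))"
    and tr: "(\<delta>' = LOut p a v \<and> ptr eval evalb defs (pren c d (\<Phi> p)) (AOut a v) P')
      \<or> (\<delta>' = LIn p a v \<and> ptr eval evalb defs (pren c d (\<Phi> p)) (AIn a v) P')"
    by (auto simp: ntr_NLeaf)
  have h1: "\<not> pcallocc defs c (\<Phi> p)" "\<not> pocc defs d (\<Phi> p)" using NLeaf(2,3) p by auto
  from tr show ?case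
  proof
    assume a: "\<delta>' = LOut p a v \<and> ptr eval evalb defs (pren c d (\<Phi> p)) (AOut a v) P'"
    then obtain \<alpha>0 P0 where "ptr eval evalb defs (\<Phi> p) \<alpha>0 P0" "AOut a v = aren c d \<alpha>0" "P' = pren c d P0"
      using ptr_pren_inv h1 by metis
    moreover then obtain a0 where "\<alpha>0 = AOut a0 v" "a = rc c d a0" using aren_inv(1) by metis
    ultimately show ?thesis using a p Y
      by (intro exI[of _ "LOut p a0 v"] exI[of _ "NLeaf V E (\<Phi>(p := P0))"])
         (auto simp: nren_leaf_upd intro: ntr.n_send)
  next
    assume a: "\<delta>' = LIn p a v \<and> ptr eval evalb defs (pren c d (\<Phi> p)) (AIn a v) P'"
    then obtain \<alpha>0 P0 where "ptr eval evalb defs (\<Phi> p) \<alpha>0 P0" "AIn a v = aren c d \<alpha>0" "P' = pren c d P0"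
      using ptr_pren_inv h1 by metis
    moreover then obtain a0 where "\<alpha>0 = AIn a0 v" "a = rc c d a0" using aren_inv(2) by metis
    ultimately show ?thesis using a p Y
      by (intro exI[of _ "LIn p a0 v"] exI[of _ "NLeaf V E (\<Phi>(p := P0))"])
         (auto simp: nren_leaf_upd intro: ntr.n_recv)
  qed
next
  case (NRes a M0)
  show ?case
  proof (cases "a = c")
    case True
    then have t: "ntr eval evalb defs (NRes c M0) \<delta>' Y" using NRes(2) by simp
    then obtain Y0 where "Y = NRes c Y0" "\<not> lab_has_chan \<delta>' c" by (auto simp: ntr_NRes)
    then show ?thesis using t True by (intro exI[of _ \<delta>'] exI[of _ Y]) (simp add: lren_id)
  next
    case False
    then have ad: "a \<noteq> d" using NRes(4) by auto
    have h: "\<not> ncallocc defs c M0" "\<not> nocc defs d M0" using NRes(3,4) False by auto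
    from NRes(2) False obtain Y0 where Y: "Y = NRes a Y0" and
      tr: "(\<exists>p v. \<delta>' = Tau \<and> ntr eval evalb defs (nren c d M0) (LOut p a v) Y0)
          \<or> (ntr eval evalb defs (nren c d M0) \<delta>' Y0 \<and> \<not> lab_has_chan \<delta>' a)"
      by (auto simp: ntr_NRes)
    from tr show ?thesis
    proof
      assume "\<exists>p v. \<delta>' = Tau \<and> ntr eval evalb defs (nren c d M0) (LOut p a v) Y0"
      then obtain p v where a1: "\<delta>' = Tau" "ntr eval evalb defs (nren c d M0) (LOut p a v) Y0" by blast
      then obtain \<delta>0 M0' where b: "ntr eval evalb defs M0 \<delta>0 M0'" "LOut p a v = lren c d \<delta>0" "Y0 = nren c d M0'"
        using NRes(1) h by metis
      then obtain a0 where "\<delta>0 = LOut p a0 v" "a = rc c d a0" using lren_inv(1) by metis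
      then have "\<delta>0 = LOut p a v" using ad False by (auto simp: rc_def split: if_splits)
      then show ?thesis using a1 b Y False
        by (intro exI[of _ Tau] exI[of _ "NRes a M0'"]) (auto intro: ntr.n_res1)
    next
      assume a1: "ntr eval evalb defs (nren c d M0) \<delta>' Y0 \<and> \<not> lab_has_chan \<delta>' a"
      then obtain \<delta>0 M0' where b: "ntr eval evalb defs M0 \<delta>0 M0'" "\<delta>' = lren c d \<delta>0" "Y0 = nren c d M0'"
        using NRes(1) h by metis
      then have "\<not> lab_has_chan \<delta>0 a" using a1 lren_has[OF False ad] by metis
      then show ?thesis using a1 b Y False
        by (intro exI[of _ \<delta>0] exI[of _ "NRes a M0'"]) (auto intro: ntr.n_res2)
    qed
  qed
next
  case (NPar M1 D M2)
  have h1: "\<not> ncallocc defs c M1" "\<not> nocc defs d M1" using NPar(4,5) by auto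
  have h2: "\<not> ncallocc defs c M2" "\<not> nocc defs d M2" using NPar(4,5) by auto
  from NPar(3) obtain Y1 Y2 where Y: "Y = NPar Y1 D Y2" and tr:
     "(\<exists>p q a v. \<delta>' = LOut p a v \<and> ntr eval evalb defs (nren c d M1) (LOut p a v) Y1 \<and> ntr eval evalb defs (nren c d M2) (LIn q a v) Y2 \<and> ((p,q) \<in> D \<or> (q,p) \<in> D))
    \<or> (\<exists>p q a v. \<delta>' = LOut p a v \<and> ntr eval evalb defs (nren c d M2) (LOut p a v) Y2 \<and> ntr eval evalb defs (nren c d M1) (LIn q a v) Y1 \<and> ((p,q) \<in> D \<or> (q,p) \<in> D))
    \<or> (ntr eval evalb defs (nren c d M1) \<delta>' Y1 \<and> Y2 = nren c d M2)
    \<or> (Y1 = nren c d M1 \<and> ntr eval evalb defs (nren c d M2) \<delta>' Y2)"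
    by (simp add: ntr_NPar) blast
  from tr consider (B1) p q a v where "\<delta>' = LOut p a v" "ntr eval evalb defs (nren c d M1) (LOut p a v) Y1"
      "ntr eval evalb defs (nren c d M2) (LIn q a v) Y2" "(p,q) \<in> D \<or> (q,p) \<in> D"
    | (B2) p q a v where "\<delta>' = LOut p a v" "ntr eval evalb defs (nren c d M2) (LOut p a v) Y2"
      "ntr eval evalb defs (nren c d M1) (LIn q a v) Y1" "(p,q) \<in> D \<or> (q,p) \<in> D"
    | (L) "ntr eval evalb defs (nren c d M1) \<delta>' Y1" "Y2 = nren c d M2" | (R) "Y1 = nren c d M1" "ntr eval evalb defs (nren c d M2) \<delta>' Y2"
    by blast
  then show ?case
  proof cases
    case B1
    note a = B1
    obtain \<delta>1 M1' where b1: "ntr eval evalb defs M1 \<delta>1 M1'" "LOut p a v = lren c d \<delta>1" "Y1 = nren c d M1'"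
      using NPar(1) a(2) h1 by metis
    obtain \<delta>2 M2' where b2: "ntr eval evalb defs M2 \<delta>2 M2'" "LIn q a v = lren c d \<delta>2" "Y2 = nren c d M2'"
      using NPar(2) a(3) h2 by metis
    obtain a1 where c1: "\<delta>1 = LOut p a1 v" "a = rc c d a1" using b1(2) lren_inv(1) by metis
    obtain a2 where c2: "\<delta>2 = LIn q a2 v" "a = rc c d a2" using b2(2) lren_inv(2) by metis
    have "a1 \<noteq> d" using ntr_chan_ne[OF b1(1) h1(2)] c1 by auto
    moreover have "a2 \<noteq> d" using ntr_chan_ne[OF b2(1) h2(2)] c2 by auto
    ultimately have "a1 = a2" using c1 c2 rc_inj by metis
    then show ?thesis using a b1 b2 c1 c2 Y
      by (intro exI[of _ "LOut p a1 v"] exI[of _ "NPar M1' D M2'"]) (auto intro: ntr.n_bcast1)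
  next
    case B2
    note a = B2
    obtain \<delta>1 M1' where b1: "ntr eval evalb defs M1 \<delta>1 M1'" "LIn q a v = lren c d \<delta>1" "Y1 = nren c d M1'"
      using NPar(1) a(3) h1 by metis
    obtain \<delta>2 M2' where b2: "ntr eval evalb defs M2 \<delta>2 M2'" "LOut p a v = lren c d \<delta>2" "Y2 = nren c d M2'"
      using NPar(2) a(2) h2 by metis
    obtain a1 where c1: "\<delta>1 = LIn q a1 v" "a = rc c d a1" using b1(2) lren_inv(2) by metis
    obtain a2 where c2: "\<delta>2 = LOut p a2 v" "a = rc c d a2" using b2(2) lren_inv(1) by metis
    have "a1 \<noteq> d" using ntr_chan_ne[OF b1(1) h1(2)] c1 by auto
    moreover have "a2 \<noteq> d" using ntr_chan_ne[OF b2(1) h2(2)] c2 by auto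
    ultimately have "a1 = a2" using c1 c2 rc_inj by metis
    then show ?thesis using a b1 b2 c1 c2 Y
      by (intro exI[of _ "LOut p a2 v"] exI[of _ "NPar M1' D M2'"]) (auto intro: ntr.n_bcast2)
  next
    case L
    note a = L
    then obtain \<delta>1 M1' where b1: "ntr eval evalb defs M1 \<delta>1 M1'" "\<delta>' = lren c d \<delta>1" "Y1 = nren c d M1'"
      using NPar(1) h1 by metis
    then show ?thesis using a Y
      by (intro exI[of _ \<delta>1] exI[of _ "NPar M1' D M2"]) (auto intro: ntr.n_parL)
  next
    case R
    note a = R
    then obtain \<delta>2 M2' where b2: "ntr eval evalb defs M2 \<delta>2 M2'" "\<delta>' = lren c d \<delta>2" "Y2 = nren c d M2'"
      using NPar(2) h2 by metis
    then show ?thesis using a Y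
      by (intro exI[of _ \<delta>2] exI[of _ "NPar M1 D M2'"]) (auto intro: ntr.n_parR)
  qed
qed


section \<open>Network simulation\<close>

lemma ntr_NPar_form: "ntr eval evalb defs (NPar M D N) \<delta> Y \<Longrightarrow> \<exists>M' N'. Y = NPar M' D N'"
  unfolding ntr_NPar by blast

lemma ntr_NRes_form: "ntr eval evalb defs (NRes c M) \<delta> Y \<Longrightarrow> \<exists>M'. Y = NRes c M'"
  unfolding ntr_NRes by blast


definition nsim where
  "nsim eval evalb defs M N \<longleftrightarrow> (\<forall>\<delta> M'. ntr eval evalb defs M \<delta> M' \<longrightarrow>
      (\<exists>N'. ntr eval evalb defs N \<delta> N' \<and> ncong evalb defs M' N'))"

lemma nsim_alpha1:
  assumes "\<not> nocc defs d M" "\<not> ncallocc defs c M"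
  shows "nsim eval evalb defs (NRes c M) (NRes d (nren c d M))"
  unfolding nsim_def
proof (intro allI impI)
  fix \<delta> X assume "ntr eval evalb defs (NRes c M) \<delta> X"
  then obtain M' where X: "X = NRes c M'" and tr: "(\<exists>p v. \<delta> = Tau \<and> ntr eval evalb defs M (LOut p c v) M')
       \<or> (ntr eval evalb defs M \<delta> M' \<and> \<not> lab_has_chan \<delta> c)" by (auto simp: ntr_NRes)
  have cg: "ncong evalb defs X (NRes d (nren c d M'))"
    unfolding X using tr assms
    by (intro ncong.nalpha) (auto dest: ntr_nocc ntr_ncallocc)
  from tr show "\<exists>N'. ntr eval evalb defs (NRes d (nren c d M)) \<delta> N' \<and> ncong evalb defs X N'"
  proof
    assume "\<exists>p v. \<delta> = Tau \<and> ntr eval evalb defs M (LOut p c v) M'"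
    then obtain p v where a: "\<delta> = Tau" "ntr eval evalb defs M (LOut p c v) M'" by blast
    have "ntr eval evalb defs (nren c d M) (lren c d (LOut p c v)) (nren c d M')"
      using ntr_nren[OF a(2)] assms by blast
    then have "ntr eval evalb defs (nren c d M) (LOut p d v) (nren c d M')" by (simp add: rc_def)
    then show ?thesis using a cg by (auto intro: ntr.n_res1)
  next
    assume a: "ntr eval evalb defs M \<delta> M' \<and> \<not> lab_has_chan \<delta> c"
    have "ntr eval evalb defs (nren c d M) (lren c d \<delta>) (nren c d M')"
      using ntr_nren[OF conjunct1[OF a]] assms by blast
    moreover have "lren c d \<delta> = \<delta>" using a by (simp add: lren_id)
    moreover have "\<not> lab_has_chan \<delta> d" using ntr_chan_ne[OF conjunct1[OF a] assms(1)] .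
    ultimately show ?thesis using cg by (auto intro: ntr.n_res2)
  qed
qed

lemma nsim_alpha2:
  assumes "\<not> nocc defs d M" "\<not> ncallocc defs c M"
  shows "nsim eval evalb defs (NRes d (nren c d M)) (NRes c M)"
  unfolding nsim_def
proof (intro allI impI)
  fix \<delta>' Y assume "ntr eval evalb defs (NRes d (nren c d M)) \<delta>' Y"
  then obtain Y0 where Y: "Y = NRes d Y0" and tr: "(\<exists>p v. \<delta>' = Tau \<and> ntr eval evalb defs (nren c d M) (LOut p d v) Y0)
       \<or> (ntr eval evalb defs (nren c d M) \<delta>' Y0 \<and> \<not> lab_has_chan \<delta>' d)" by (auto simp: ntr_NRes)
  from tr show "\<exists>N'. ntr eval evalb defs (NRes c M) \<delta>' N' \<and> ncong evalb defs Y N'"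
  proof
    assume "\<exists>p v. \<delta>' = Tau \<and> ntr eval evalb defs (nren c d M) (LOut p d v) Y0"
    then obtain p v where a: "\<delta>' = Tau" "ntr eval evalb defs (nren c d M) (LOut p d v) Y0" by blast
    obtain \<delta>0 M' where b: "ntr eval evalb defs M \<delta>0 M'" "LOut p d v = lren c d \<delta>0" "Y0 = nren c d M'"
      using ntr_nren_inv[OF a(2)] assms by metis
    obtain a0 where c: "\<delta>0 = LOut p a0 v" "d = rc c d a0" using b(2) lren_inv(1) by metis
    have "a0 \<noteq> d" using ntr_chan_ne[OF b(1) assms(1)] c by auto
    then have "a0 = c" using c by (auto simp: rc_def split: if_splits)
    then have t: "ntr eval evalb defs (NRes c M) Tau (NRes c M')" using b c by (auto intro: ntr.n_res1)
    have "ncong evalb defs (NRes c M') (NRes d (nren c d M'))"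
      using b assms by (intro ncong.nalpha) (auto dest: ntr_nocc ntr_ncallocc)
    then show ?thesis using t a Y b by (auto intro: ncong.nsym)
  next
    assume a: "ntr eval evalb defs (nren c d M) \<delta>' Y0 \<and> \<not> lab_has_chan \<delta>' d"
    obtain \<delta>0 M' where b: "ntr eval evalb defs M \<delta>0 M'" "\<delta>' = lren c d \<delta>0" "Y0 = nren c d M'"
      using ntr_nren_inv a assms by metis
    have "\<not> lab_has_chan \<delta>0 c" using a b by (cases \<delta>0) (auto simp: rc_def)
    then have "\<delta>' = \<delta>0" "\<not> lab_has_chan \<delta>0 c" using b lren_id by auto
    then have t: "ntr eval evalb defs (NRes c M) \<delta>' (NRes c M')" using b by (auto intro: ntr.n_res2)
    have "ncong evalb defs (NRes c M') (NRes d (nren c d M'))"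
      using b assms by (intro ncong.nalpha) (auto dest: ntr_nocc ntr_ncallocc)
    then show ?thesis using t a Y b by (auto intro: ncong.nsym)
  qed
qed

lemma nsim_rescomm: "nsim eval evalb defs (NRes c (NRes d M)) (NRes d (NRes c M))"
  unfolding nsim_def
proof (intro allI impI)
  fix \<delta> X assume h: "ntr eval evalb defs (NRes c (NRes d M)) \<delta> X"
  show "\<exists>N'. ntr eval evalb defs (NRes d (NRes c M)) \<delta> N' \<and> ncong evalb defs X N'"
  proof (cases "c = d")
    case True then show ?thesis using h by (auto intro: ncong.nrefl)
  next
    case False
    from h obtain X1 where X1: "X = NRes c X1" and tr0:
       "(\<exists>p v. \<delta> = Tau \<and> ntr eval evalb defs (NRes d M) (LOut p c v) X1)
        \<or> (ntr eval evalb defs (NRes d M) \<delta> X1 \<and> \<not> lab_has_chan \<delta> c)"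
      unfolding ntr_NRes by blast
    obtain M' where X1': "X1 = NRes d M'" using tr0 ntr_NRes_form[of eval evalb defs d M] by blast
    have tr: "(\<exists>p v. \<delta> = Tau \<and> ntr eval evalb defs M (LOut p c v) M') \<or>
           (\<exists>p v. \<delta> = Tau \<and> ntr eval evalb defs M (LOut p d v) M') \<or>
           (ntr eval evalb defs M \<delta> M' \<and> \<not> lab_has_chan \<delta> c \<and> \<not> lab_has_chan \<delta> d)"
      using tr0 unfolding X1' ntr_NRes by auto
    have X: "X = NRes c (NRes d M')" using X1 X1' by simp
    have cg: "ncong evalb defs X (NRes d (NRes c M'))" unfolding X by (rule ncong.nres_comm)
    from tr show ?thesis
    proof (elim disjE exE conjE)
      fix p v assume a: "\<delta> = Tau" "ntr eval evalb defs M (LOut p c v) M'"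
      have "ntr eval evalb defs (NRes c M) Tau (NRes c M')" by (rule ntr.n_res1[OF a(2)])
      then have "ntr eval evalb defs (NRes d (NRes c M)) Tau (NRes d (NRes c M'))" by (rule ntr.n_res2) simp
      then show ?thesis using a cg by blast
    next
      fix p v assume a: "\<delta> = Tau" "ntr eval evalb defs M (LOut p d v) M'"
      have "ntr eval evalb defs (NRes c M) (LOut p d v) (NRes c M')" using False by (intro ntr.n_res2[OF a(2)]) simp
      then have "ntr eval evalb defs (NRes d (NRes c M)) Tau (NRes d (NRes c M'))" by (rule ntr.n_res1)
      then show ?thesis using a cg by blast
    next
      assume a: "ntr eval evalb defs M \<delta> M'" "\<not> lab_has_chan \<delta> c" "\<not> lab_has_chan \<delta> d"
      have "ntr eval evalb defs (NRes d (NRes c M)) \<delta> (NRes d (NRes c M'))"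
        using a by (intro ntr.n_res2) 
      then show ?thesis using cg by blast
    qed
  qed
qed

lemma nsim_parcomm: "nsim eval evalb defs (NPar M D N) (NPar N D M)"
  unfolding nsim_def
proof (intro allI impI)
  fix \<delta> X assume h: "ntr eval evalb defs (NPar M D N) \<delta> X"
  then obtain M' N' where X: "X = NPar M' D N'" using ntr_NPar_form[of eval evalb defs M D N] by blast
  have cg: "ncong evalb defs X (NPar N' D M')" unfolding X by (rule ncong.npar_comm)
  from h[unfolded X] consider
        (B1) p q b v where "\<delta> = LOut p b v" "ntr eval evalb defs M (LOut p b v) M'" "ntr eval evalb defs N (LIn q b v) N'" "(p,q) \<in> D \<or> (q,p) \<in> D"
      | (B2) p q b v where "\<delta> = LOut p b v" "ntr eval evalb defs N (LOut p b v) N'" "ntr eval evalb defs M (LIn q b v) M'" "(p,q) \<in> D \<or> (q,p) \<in> D"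
      | (L) "ntr eval evalb defs M \<delta> M'" "N' = N"
      | (R) "M' = M" "ntr eval evalb defs N \<delta> N'"
    unfolding ntr_NPar by blast
  then have "ntr eval evalb defs (NPar N D M) \<delta> (NPar N' D M')"
  proof cases
    case B1 then show ?thesis using ntr.n_bcast2[of eval evalb defs M p b v M' N q N' D] by simp
  next
    case B2 then show ?thesis using ntr.n_bcast1[of eval evalb defs N p b v N' M q M' D] by simp
  next
    case L then show ?thesis by (simp add: ntr.n_parR)
  next
    case R then show ?thesis by (simp add: ntr.n_parL)
  qed
  then show "\<exists>N'. ntr eval evalb defs (NPar N D M) \<delta> N' \<and> ncong evalb defs X N'" using cg by blast
qed

lemma nsim_extr1:
  assumes nf: "\<not> nfree defs c M"
  shows "nsim eval evalb defs (NRes c (NPar M D N)) (NPar M D (NRes c N))"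
  unfolding nsim_def
proof (intro allI impI)
  have F1: "\<And>\<delta> M'. ntr eval evalb defs M \<delta> M' \<Longrightarrow> \<not> lab_has_chan \<delta> c" using nf ntr_lab by metis
  have F2: "\<And>\<delta> M'. ntr eval evalb defs M \<delta> M' \<Longrightarrow> \<not> nfree defs c M'" using nf ntr_nfree by metis
  fix \<delta> X assume h: "ntr eval evalb defs (NRes c (NPar M D N)) \<delta> X"
  then obtain Y where Y: "X = NRes c Y" and tr0:
    "(\<exists>p v. \<delta> = Tau \<and> ntr eval evalb defs (NPar M D N) (LOut p c v) Y)
     \<or> (ntr eval evalb defs (NPar M D N) \<delta> Y \<and> \<not> lab_has_chan \<delta> c)"
    unfolding ntr_NRes by blast
  obtain M' N' where Y': "Y = NPar M' D N'" using tr0 ntr_NPar_form[of eval evalb defs M D N] by blast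
  have X: "X = NRes c (NPar M' D N')" using Y Y' by simp
  have tr: "(\<exists>p v. \<delta> = Tau \<and> ntr eval evalb defs (NPar M D N) (LOut p c v) (NPar M' D N'))
     \<or> (ntr eval evalb defs (NPar M D N) \<delta> (NPar M' D N') \<and> \<not> lab_has_chan \<delta> c)"
    using tr0 Y' by simp
  show "\<exists>N''. ntr eval evalb defs (NPar M D (NRes c N)) \<delta> N'' \<and> ncong evalb defs X N''"
  proof (cases "\<exists>p v. \<delta> = Tau \<and> ntr eval evalb defs (NPar M D N) (LOut p c v) (NPar M' D N')")
    case True
    then obtain p v where a: "\<delta> = Tau" "ntr eval evalb defs (NPar M D N) (LOut p c v) (NPar M' D N')" by blast
    then have "M' = M" "ntr eval evalb defs N (LOut p c v) N'"
      unfolding ntr_NPar using F1 by (auto; fastforce)+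
    then have "ntr eval evalb defs (NPar M D (NRes c N)) Tau (NPar M D (NRes c N'))"
      by (intro ntr.n_parR ntr.n_res1)
    moreover have "ncong evalb defs X (NPar M D (NRes c N'))"
      unfolding X \<open>M' = M\<close> using nf by (rule ncong.nextrude)
    ultimately show ?thesis using a by blast
  next
    case False
    then have a: "ntr eval evalb defs (NPar M D N) \<delta> (NPar M' D N')" "\<not> lab_has_chan \<delta> c" using tr by auto
    have cg: "ncong evalb defs X (NPar M' D (NRes c N'))"
    proof -
      have "\<not> nfree defs c M'"
      proof (cases "M' = M")
        case True then show ?thesis using nf by simp
      next
        case False then show ?thesis using a(1) F2 unfolding ntr_NPar by auto
      qed
      then show ?thesis unfolding X by (rule ncong.nextrude)
    qed
    have "ntr eval evalb defs (NPar M D (NRes c N)) \<delta> (NPar M' D (NRes c N'))"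
    proof -
      from a(1) consider
        (B1) p q b v where "\<delta> = LOut p b v" "ntr eval evalb defs M (LOut p b v) M'" "ntr eval evalb defs N (LIn q b v) N'" "(p,q) \<in> D \<or> (q,p) \<in> D"
      | (B2) p q b v where "\<delta> = LOut p b v" "ntr eval evalb defs N (LOut p b v) N'" "ntr eval evalb defs M (LIn q b v) M'" "(p,q) \<in> D \<or> (q,p) \<in> D"
      | (L) "ntr eval evalb defs M \<delta> M'" "N' = N"
      | (R) "M' = M" "ntr eval evalb defs N \<delta> N'"
        unfolding ntr_NPar by blast
      then show ?thesis
      proof cases
        case B1
        have "ntr eval evalb defs (NRes c N) (LIn q b v) (NRes c N')"
          using B1 a(2) by (intro ntr.n_res2) auto
        then show ?thesis using B1 by (auto intro: ntr.n_bcast1)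
      next
        case B2
        have "ntr eval evalb defs (NRes c N) (LOut p b v) (NRes c N')"
          using B2 a(2) by (intro ntr.n_res2) auto
        then show ?thesis using B2 ntr.n_bcast2[of eval evalb defs "NRes c N" p b v "NRes c N'" M q M' D] by auto
      next
        case L then show ?thesis by (auto intro: ntr.n_parL)
      next
        case R then show ?thesis using a(2) by (auto intro: ntr.n_parR ntr.n_res2)
      qed
    qed
    then show ?thesis using cg by blast
  qed
qed

lemma nsim_extr2:
  assumes nf: "\<not> nfree defs c M"
  shows "nsim eval evalb defs (NPar M D (NRes c N)) (NRes c (NPar M D N))"
  unfolding nsim_def
proof (intro allI impI)
  have F1: "\<And>\<delta> M'. ntr eval evalb defs M \<delta> M' \<Longrightarrow> \<not> lab_has_chan \<delta> c" using nf ntr_lab by metis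
  have F2: "\<And>\<delta> M'. ntr eval evalb defs M \<delta> M' \<Longrightarrow> \<not> nfree defs c M'" using nf ntr_nfree by metis
  fix \<delta> X assume h: "ntr eval evalb defs (NPar M D (NRes c N)) \<delta> X"
  then consider
        (B1) p q b v M' N' where "X = NPar M' D (NRes c N')" "\<delta> = LOut p b v" "ntr eval evalb defs M (LOut p b v) M'"
             "ntr eval evalb defs N (LIn q b v) N'" "(p,q) \<in> D \<or> (q,p) \<in> D"
      | (B2) p q b v M' N' where "X = NPar M' D (NRes c N')" "\<delta> = LOut p b v" "ntr eval evalb defs N (LOut p b v) N'"
             "ntr eval evalb defs M (LIn q b v) M'" "(p,q) \<in> D \<or> (q,p) \<in> D" "b \<noteq> c"
      | (L) M' where "X = NPar M' D (NRes c N)" "ntr eval evalb defs M \<delta> M'"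
      | (R1) p v N' where "X = NPar M D (NRes c N')" "\<delta> = Tau" "ntr eval evalb defs N (LOut p c v) N'"
      | (R2) N' where "X = NPar M D (NRes c N')" "ntr eval evalb defs N \<delta> N'" "\<not> lab_has_chan \<delta> c"
    unfolding ntr_NPar ntr_NRes by auto
  then show "\<exists>N''. ntr eval evalb defs (NRes c (NPar M D N)) \<delta> N'' \<and> ncong evalb defs X N''"
  proof cases
    case B1
    have "b \<noteq> c" using F1[OF B1(3)] by simp
    have "ntr eval evalb defs (NPar M D N) \<delta> (NPar M' D N')"
      unfolding B1(2) by (rule ntr.n_bcast1[OF B1(3) B1(4) B1(5)])
    then have "ntr eval evalb defs (NRes c (NPar M D N)) \<delta> (NRes c (NPar M' D N'))"
      using B1 \<open>b \<noteq> c\<close> by (intro ntr.n_res2) auto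
    moreover have "ncong evalb defs X (NRes c (NPar M' D N'))"
      unfolding B1(1) using F2[OF B1(3)] by (rule ncong.nextrude[THEN ncong.nsym])
    ultimately show ?thesis by blast
  next
    case B2
    have "ntr eval evalb defs (NPar M D N) \<delta> (NPar M' D N')"
      using B2 ntr.n_bcast2[of eval evalb defs N p b v N' M q M' D] by auto
    then have "ntr eval evalb defs (NRes c (NPar M D N)) \<delta> (NRes c (NPar M' D N'))"
      using B2 by (intro ntr.n_res2) auto
    moreover have "ncong evalb defs X (NRes c (NPar M' D N'))"
      unfolding B2(1) using F2[OF B2(4)] by (rule ncong.nextrude[THEN ncong.nsym])
    ultimately show ?thesis by blast
  next
    case L
    have "ntr eval evalb defs (NRes c (NPar M D N)) \<delta> (NRes c (NPar M' D N))"
      using L F1[OF L(2)] by (intro ntr.n_res2 ntr.n_parL) auto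
    moreover have "ncong evalb defs X (NRes c (NPar M' D N))"
      unfolding L(1) using F2[OF L(2)] by (rule ncong.nextrude[THEN ncong.nsym])
    ultimately show ?thesis by blast
  next
    case R1
    have "ntr eval evalb defs (NRes c (NPar M D N)) \<delta> (NRes c (NPar M D N'))"
      using R1 by (auto intro: ntr.n_res1 ntr.n_parR)
    moreover have "ncong evalb defs X (NRes c (NPar M D N'))"
      unfolding R1(1) using nf by (rule ncong.nextrude[THEN ncong.nsym])
    ultimately show ?thesis by blast
  next
    case R2
    have "ntr eval evalb defs (NRes c (NPar M D N)) \<delta> (NRes c (NPar M D N'))"
      using R2 by (intro ntr.n_res2 ntr.n_parR) auto
    moreover have "ncong evalb defs X (NRes c (NPar M D N'))"
      unfolding R2(1) using nf by (rule ncong.nextrude[THEN ncong.nsym])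
    ultimately show ?thesis by blast
  qed
qed

lemma nsim_leaf:
  assumes "\<And>p. p \<in> V \<Longrightarrow> pcong evalb defs (\<Phi> p) (\<Psi> p)"
  shows "nsim eval evalb defs (NLeaf V E \<Phi>) (NLeaf V E \<Psi>)"
  unfolding nsim_def
proof (intro allI impI)
  fix \<delta> X assume "ntr eval evalb defs (NLeaf V E \<Phi>) \<delta> X"
  then obtain p a v P' where p: "p \<in> V" and X: "X = NLeaf V E (\<Phi>(p := P'))"
    and tr: "(\<delta> = LOut p a v \<and> ptr eval evalb defs (\<Phi> p) (AOut a v) P')
      \<or> (\<delta> = LIn p a v \<and> ptr eval evalb defs (\<Phi> p) (AIn a v) P')"
    by (auto simp: ntr_NLeaf)
  have ps: "psim eval evalb defs (\<Phi> p) (\<Psi> p)" using pcong_psim assms p by blast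
  have cg: "ncong evalb defs X (NLeaf V E (\<Psi>(p := Q')))" if "pcong evalb defs P' Q'" for Q'
    unfolding X using assms that by (intro ncong.nctx_leaf) auto
  from tr show "\<exists>N'. ntr eval evalb defs (NLeaf V E \<Psi>) \<delta> N' \<and> ncong evalb defs X N'"
  proof
    assume a: "\<delta> = LOut p a v \<and> ptr eval evalb defs (\<Phi> p) (AOut a v) P'"
    then obtain Q' where "ptr eval evalb defs (\<Psi> p) (AOut a v) Q'" "pcong evalb defs P' Q'"
      using ps unfolding psim_def by blast
    then show ?thesis using a p cg by (blast intro: ntr.n_send)
  next
    assume a: "\<delta> = LIn p a v \<and> ptr eval evalb defs (\<Phi> p) (AIn a v) P'"
    then obtain Q' where "ptr eval evalb defs (\<Psi> p) (AIn a v) Q'" "pcong evalb defs P' Q'"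
      using ps unfolding psim_def by blast
    then show ?thesis using a p cg by (blast intro: ntr.n_recv)
  qed
qed

lemma nsim_res: "nsim eval evalb defs M N \<Longrightarrow> nsim eval evalb defs (NRes c M) (NRes c N)"
  unfolding nsim_def
proof (intro allI impI)
  assume S: "\<forall>\<delta> M'. ntr eval evalb defs M \<delta> M' \<longrightarrow> (\<exists>N'. ntr eval evalb defs N \<delta> N' \<and> ncong evalb defs M' N')"
  fix \<delta> X assume h: "ntr eval evalb defs (NRes c M) \<delta> X"
  then obtain M' where X: "X = NRes c M'" using ntr_NRes_form[of eval evalb defs c M] by blast
  from h[unfolded X] consider (R1) p v where "\<delta> = Tau" "ntr eval evalb defs M (LOut p c v) M'"
     | (R2) "ntr eval evalb defs M \<delta> M'" "\<not> lab_has_chan \<delta> c"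
    unfolding ntr_NRes by blast
  then show "\<exists>N'. ntr eval evalb defs (NRes c N) \<delta> N' \<and> ncong evalb defs X N'"
  proof cases
    case R1
    then obtain N' where "ntr eval evalb defs N (LOut p c v) N'" "ncong evalb defs M' N'" using S by blast
    then show ?thesis using R1 X by (blast intro: ntr.n_res1 ncong.nctx_res)
  next
    case R2
    then obtain N' where "ntr eval evalb defs N \<delta> N'" "ncong evalb defs M' N'" using S by blast
    then show ?thesis using R2 X by (blast intro: ntr.n_res2 ncong.nctx_res)
  qed
qed

lemma nsim_par: "nsim eval evalb defs M M' \<Longrightarrow> nsim eval evalb defs N N'
   \<Longrightarrow> ncong evalb defs M M' \<Longrightarrow> ncong evalb defs N N'
   \<Longrightarrow> nsim eval evalb defs (NPar M D N) (NPar M' D N')"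
  unfolding nsim_def
proof (intro allI impI)
  assume CM: "ncong evalb defs M M'" and CN: "ncong evalb defs N N'"
  assume S1: "\<forall>\<delta> X. ntr eval evalb defs M \<delta> X \<longrightarrow> (\<exists>Y. ntr eval evalb defs M' \<delta> Y \<and> ncong evalb defs X Y)"
  assume S2: "\<forall>\<delta> X. ntr eval evalb defs N \<delta> X \<longrightarrow> (\<exists>Y. ntr eval evalb defs N' \<delta> Y \<and> ncong evalb defs X Y)"
  fix \<delta> X assume h: "ntr eval evalb defs (NPar M D N) \<delta> X"
  then obtain M1 N1 where X: "X = NPar M1 D N1" using ntr_NPar_form[of eval evalb defs M D N] by blast
  from h[unfolded X] consider
        (B1) p q b v where "\<delta> = LOut p b v" "ntr eval evalb defs M (LOut p b v) M1" "ntr eval evalb defs N (LIn q b v) N1" "(p,q) \<in> D \<or> (q,p) \<in> D"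
      | (B2) p q b v where "\<delta> = LOut p b v" "ntr eval evalb defs N (LOut p b v) N1" "ntr eval evalb defs M (LIn q b v) M1" "(p,q) \<in> D \<or> (q,p) \<in> D"
      | (L) "ntr eval evalb defs M \<delta> M1" "N1 = N"
      | (R) "M1 = M" "ntr eval evalb defs N \<delta> N1"
    unfolding ntr_NPar by blast
  then show "\<exists>Y. ntr eval evalb defs (NPar M' D N') \<delta> Y \<and> ncong evalb defs X Y"
  proof cases
    case B1
    obtain M2 where m: "ntr eval evalb defs M' (LOut p b v) M2" "ncong evalb defs M1 M2" using S1 B1(2) by blast
    obtain N2 where n: "ntr eval evalb defs N' (LIn q b v) N2" "ncong evalb defs N1 N2" using S2 B1(3) by blast
    have "ntr eval evalb defs (NPar M' D N') \<delta> (NPar M2 D N2)"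
      unfolding B1(1) by (rule ntr.n_bcast1[OF m(1) n(1) B1(4)])
    then show ?thesis using m n X by (blast intro: ncong.nctx_par)
  next
    case B2
    obtain M2 where m: "ntr eval evalb defs M' (LIn q b v) M2" "ncong evalb defs M1 M2" using S1 B2(3) by blast
    obtain N2 where n: "ntr eval evalb defs N' (LOut p b v) N2" "ncong evalb defs N1 N2" using S2 B2(2) by blast
    have "ntr eval evalb defs (NPar M' D N') \<delta> (NPar M2 D N2)"
      unfolding B2(1) by (rule ntr.n_bcast2[OF n(1) m(1) B2(4)])
    then show ?thesis using m n X by (blast intro: ncong.nctx_par)
  next
    case L
    obtain M2 where m: "ntr eval evalb defs M' \<delta> M2" "ncong evalb defs M1 M2" using S1 L(1) by blast
    have "ntr eval evalb defs (NPar M' D N') \<delta> (NPar M2 D N')" by (rule ntr.n_parL[OF m(1)])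
    moreover have "ncong evalb defs X (NPar M2 D N')"
      unfolding X L(2) by (rule ncong.nctx_par[OF m(2) CN])
    ultimately show ?thesis by blast
  next
    case R
    obtain N2 where n: "ntr eval evalb defs N' \<delta> N2" "ncong evalb defs N1 N2" using S2 R(2) by blast
    have "ntr eval evalb defs (NPar M' D N') \<delta> (NPar M' D N2)" by (rule ntr.n_parR[OF n(1)])
    moreover have "ncong evalb defs X (NPar M' D N2)"
      unfolding X R(1) by (rule ncong.nctx_par[OF CM n(2)])
    ultimately show ?thesis by blast
  qed
qed

lemma nsim_trans: "nsim eval evalb defs M N \<Longrightarrow> nsim eval evalb defs N K \<Longrightarrow> nsim eval evalb defs M K"
proof -
  assume A: "nsim eval evalb defs M N" and B: "nsim eval evalb defs N K"
  show ?thesis unfolding nsim_def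
  proof (intro allI impI)
    fix \<delta> M' assume "ntr eval evalb defs M \<delta> M'"
    then obtain N' where n: "ntr eval evalb defs N \<delta> N'" "ncong evalb defs M' N'" using A unfolding nsim_def by blast
    then obtain K' where k: "ntr eval evalb defs K \<delta> K'" "ncong evalb defs N' K'" using B unfolding nsim_def by blast
    show "\<exists>K'. ntr eval evalb defs K \<delta> K' \<and> ncong evalb defs M' K'"
      using k n(2) ncong.ntrans_cong by blast
  qed
qed

lemma ncong_nsim: "ncong evalb defs M N \<Longrightarrow> nsim eval evalb defs M N \<and> nsim eval evalb defs N M"
proof (induction rule: ncong.induct)
  case (nrefl M) then show ?case by (auto simp: nsim_def intro: ncong.nrefl)
next
  case (nsym M N) then show ?case by blast
next
  case (ntrans_cong M N K) then show ?case using nsim_trans by metis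
next
  case (nalpha d M c) then show ?case by (simp add: nsim_alpha1 nsim_alpha2)
next
  case (nres_comm c d M) then show ?case by (simp add: nsim_rescomm)
next
  case (npar_comm M D N) then show ?case by (simp add: nsim_parcomm)
next
  case (nextrude c M D N) then show ?case by (simp add: nsim_extr1 nsim_extr2)
next
  case (nctx_leaf V \<Phi> \<Psi> E) then show ?case using nsim_leaf pcong.psym by metis
next
  case (nctx_res M N c) then show ?case by (simp add: nsim_res)
next
  case (nctx_par M M' N N' D)
  have s1: "ncong evalb defs M' M" "ncong evalb defs N' N" using nctx_par(1,2) by (auto intro: ncong.nsym)
  show ?case using nsim_par[OF conjunct1[OF nctx_par(3)] conjunct1[OF nctx_par(4)] nctx_par(1,2)]
      nsim_par[OF conjunct2[OF nctx_par(3)] conjunct2[OF nctx_par(4)] s1] by (rule conjI)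
qed

theorem lemma3:
  fixes eval :: "'e \<Rightarrow> 'v" and evalb :: "'b \<Rightarrow> bool"
    and defs :: "('c,'v,'e,'b,'k) cdefs"
    and M M' N :: "('l::countable,'c,'v,'e,'b,'k) net" and \<delta> :: "('l,'c,'v) lab"
  assumes "wf_net M" and "wf_net M'" and "wf_net N"
    and "ntr eval evalb defs M \<delta> M'"
    and "ncong evalb defs M N"
  shows "\<exists>N'. wf_net N' \<and> ntr eval evalb defs N \<delta> N' \<and> ncong evalb defs M' N'"
proof -
  have "nsim eval evalb defs M N" using ncong_nsim assms(5) by blast
  then obtain N' where "ntr eval evalb defs N \<delta> N'" "ncong evalb defs M' N'"
    using assms(4) unfolding nsim_def by blast
  moreover have "wf_net N'" using ntr_wf[OF calculation(1)] assms(3) by blast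
  ultimately show ?thesis by blast
qed

end
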